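(* For every integer $k\geq 1$, the symmetric directed paths satisfy $\chi'_{D_{1,2}}(\overleftrightarrow{P_{2k}}) = 2$ and $\chi'_{D_{1,2}}(\overleftrightarrow{P_{2k+1}}) = 3$. For every integer $n \geq 3$, the symmetric directed cycle satisfies $\chi'_{D_{1,2}}(\overleftrightarrow{C_n}) = 3$.
   Context: $P_n$ denotes the path on $n$ vertices and $C_n$ the cycle on $n$ vertices. For a simple graph $G$, the symmetric digraph $\overleftrightarrow{G}$ is obtained by replacing each edge $uv$ of $G$ by the pair of opposite arcs $\overrightarrow{uv}$ and $\overrightarrow{vu}$. An arc-colouring is proper of type I if any two consecutive arcs $\overrightarrow{uv},\overrightarrow{vw}$ (including $w=u$) receive distinct colours. An arc-colouring is distinguishing if the only automorphism of $\overleftrightarrow{G}$ preserving the colour of every arc is the identity. $\chi'_{D_{1,2}}(\overleftrightarrow{G})$ is the least number of colours in a distinguishing proper arc-colouring of type I of $\overleftrightarrow{G}$. *)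

theory Defs
  imports Main
begin

text \<open>A simple graph is given by a vertex set V and a symmetric irreflexive
edge predicate E. Its symmetric digraph has arc set {(u,v). uv edge}.\<close>

definition sym_arcs :: "'a set \<Rightarrow> ('a \<Rightarrow> 'a \<Rightarrow> bool) \<Rightarrow> ('a \<times> 'a) set" where
  "sym_arcs V E = {(u, v). u \<in> V \<and> v \<in> V \<and> E u v}"

definition digraph_aut :: "'a set \<Rightarrow> ('a \<times> 'a) set \<Rightarrow> ('a \<Rightarrow> 'a) \<Rightarrow> bool" where
  "digraph_aut V A \<sigma> \<longleftrightarrow> bij_betw \<sigma> V V \<and>
     (\<forall>u\<in>V. \<forall>v\<in>V. (u, v) \<in> A \<longleftrightarrow> (\<sigma> u, \<sigma> v) \<in> A)"

text \<open>Proper arc-colouring of type I: consecutive arcs uv, vw (w = u allowed) get distinct colours.\<close>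
definition proper_arc_col_I :: "('a \<times> 'a) set \<Rightarrow> ('a \<times> 'a \<Rightarrow> nat) \<Rightarrow> bool" where
  "proper_arc_col_I A c \<longleftrightarrow>
     (\<forall>u v w. (u, v) \<in> A \<and> (v, w) \<in> A \<longrightarrow> c (u, v) \<noteq> c (v, w))"

definition distinguishing_arc_col :: "'a set \<Rightarrow> ('a \<times> 'a) set \<Rightarrow> ('a \<times> 'a \<Rightarrow> nat) \<Rightarrow> bool" where
  "distinguishing_arc_col V A c \<longleftrightarrow>
     (\<forall>\<sigma>. digraph_aut V A \<sigma> \<and> (\<forall>(u, v) \<in> A. c (\<sigma> u, \<sigma> v) = c (u, v))
          \<longrightarrow> (\<forall>v\<in>V. \<sigma> v = v))"

definition chi_D12 :: "'a set \<Rightarrow> ('a \<Rightarrow> 'a \<Rightarrow> bool) \<Rightarrow> nat" where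
  "chi_D12 V E = (LEAST k. \<exists>c :: 'a \<times> 'a \<Rightarrow> nat.
      (\<forall>a \<in> sym_arcs V E. c a < k) \<and>
      proper_arc_col_I (sym_arcs V E) c \<and>
      distinguishing_arc_col V (sym_arcs V E) c)"

text \<open>Path P_n on vertices 0..n-1 and cycle C_n on vertices 0..n-1.\<close>
definition path_edge :: "nat \<Rightarrow> nat \<Rightarrow> bool" where
  "path_edge u v \<longleftrightarrow> u + 1 = v \<or> v + 1 = u"

definition cycle_edge :: "nat \<Rightarrow> nat \<Rightarrow> nat \<Rightarrow> bool" where
  "cycle_edge n u v \<longleftrightarrow> (u + 1) mod n = v \<or> (v + 1) mod n = u"

end

theory Submission
  imports Defs
begin


lemma two_col_out:
  assumes "proper_arc_col_I A c" "(v,u) \<in> A" "(u,v) \<in> A" "(u,w) \<in> A"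
    "c (u,v) < 2" "c (u,w) < 2" "c (v,u) < 2"
  shows "c (u,v) = c (u,w)"
proof -
  have "c (v,u) \<noteq> c (u,v)" "c (v,u) \<noteq> c (u,w)"
    using assms(1-4) unfolding proper_arc_col_I_def by blast+
  then show ?thesis using assms(5-7) by linarith
qed

lemma two_col_rev:
  assumes "proper_arc_col_I A c" "(v,u) \<in> A" "(u,v) \<in> A"
  shows "c (u,v) \<noteq> c (v,u)"
  using assms unfolding proper_arc_col_I_def by blast

lemma two_col_chain:
  assumes sym: "\<And>u v. E u v \<Longrightarrow> E v u"
    and ch: "\<And>i. i + 1 < n \<Longrightarrow> E i (Suc i)"
    and pr: "proper_arc_col_I (sym_arcs {..<n} E) c"
    and lt: "\<forall>a \<in> sym_arcs {..<n} E. c a < 2"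
  shows "u + 1 < n \<Longrightarrow> c (u, Suc u) = (c (0,1) + u) mod 2 \<and> c (Suc u, u) = (c (0,1) + u + 1) mod 2"
proof (induction u)
  case 0
  have a: "(0, 1) \<in> sym_arcs {..<n} E" "(1, 0) \<in> sym_arcs {..<n} E"
    using 0 ch[of 0] sym[of 0 1] by (auto simp: sym_arcs_def)
  have "c (0,1) < 2" "c (1,0) < 2" using a lt by auto
  moreover have "c (0,1) \<noteq> c (1,0)" using two_col_rev[OF pr a(2) a(1)] .
  ultimately show ?case by simp arith
next
  case (Suc u)
  then have IH: "c (u, Suc u) = (c (0,1) + u) mod 2" "c (Suc u, u) = (c (0,1) + u + 1) mod 2" by auto
  let ?A = "sym_arcs {..<n} E"
  have a: "(u, Suc u) \<in> ?A" "(Suc u, u) \<in> ?A" "(Suc u, Suc (Suc u)) \<in> ?A" "(Suc (Suc u), Suc u) \<in> ?A"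
    using Suc.prems ch[of u] ch[of "Suc u"] sym[of u "Suc u"] sym[of "Suc u" "Suc (Suc u)"]
    by (auto simp: sym_arcs_def)
  have l: "c (u, Suc u) < 2" "c (Suc u, u) < 2" "c (Suc u, Suc (Suc u)) < 2" "c (Suc (Suc u), Suc u) < 2"
    using a lt by auto
  have e1: "c (Suc u, u) = c (Suc u, Suc (Suc u))"
    using two_col_out[OF pr a(1) a(2) a(3) l(2) l(3) l(1)] .
  have e2: "c (Suc u, Suc (Suc u)) \<noteq> c (Suc (Suc u), Suc u)"
    using two_col_rev[OF pr a(4) a(3)] .
  show ?case using IH e1 e2 l by presburger
qed

lemma propagate:
  assumes aut: "digraph_aut {..<n} (sym_arcs {..<n} E) \<sigma>"
    and ch: "\<And>i. i + 1 < n \<Longrightarrow> E i (Suc i)"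
    and nb: "\<And>i v. i + 2 < n \<Longrightarrow> v < n \<Longrightarrow> E (Suc i) v \<Longrightarrow> v = i \<or> v = i + 2"
    and s0: "\<sigma> 0 = 0" and s1: "\<sigma> 1 = 1"
  shows "\<forall>i<n. \<sigma> i = i"
proof -
  have bij: "bij_betw \<sigma> {..<n} {..<n}" using aut by (simp add: digraph_aut_def)
  have maps: "\<And>u. u < n \<Longrightarrow> \<sigma> u < n" using bij bij_betwE by blast
  have inj: "inj_on \<sigma> {..<n}" using bij bij_betw_def by blast
  have arc: "\<And>u v. u < n \<Longrightarrow> v < n \<Longrightarrow> E u v \<Longrightarrow> E (\<sigma> u) (\<sigma> v)"
    using aut maps by (auto simp: digraph_aut_def sym_arcs_def)
  have key: "i + 1 < n \<longrightarrow> \<sigma> i = i \<and> \<sigma> (Suc i) = Suc i" for i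
  proof (induction i)
    case 0 then show ?case using s0 s1 by simp
  next
    case (Suc i)
    show ?case
    proof
      assume h: "Suc i + 1 < n"
      then have IH: "\<sigma> i = i" "\<sigma> (Suc i) = Suc i" using Suc by auto
      have "E (Suc i) (Suc (Suc i))" using ch h by simp
      then have "E (\<sigma> (Suc i)) (\<sigma> (Suc (Suc i)))" using arc h by simp
      then have "E (Suc i) (\<sigma> (Suc (Suc i)))" using IH by simp
      then have "\<sigma> (Suc (Suc i)) = i \<or> \<sigma> (Suc (Suc i)) = i + 2" using nb h maps[of "Suc (Suc i)"] by simp
      moreover have "\<sigma> (Suc (Suc i)) \<noteq> i"
      proof
        assume "\<sigma> (Suc (Suc i)) = i"
        then have "\<sigma> (Suc (Suc i)) = \<sigma> i" using IH by simp
        then show False using inj h unfolding inj_on_def by fastforce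
      qed
      ultimately show "\<sigma> (Suc i) = Suc i \<and> \<sigma> (Suc (Suc i)) = Suc (Suc i)" using IH by simp
    qed
  qed
  show ?thesis
  proof (intro allI impI)
    fix i assume "i < n"
    show "\<sigma> i = i"
    proof (cases i)
      case 0 then show ?thesis using s0 by simp
    next
      case (Suc j) then show ?thesis using key[of j] \<open>i < n\<close> by simp
    qed
  qed
qed

lemma chi_eq:
  assumes "\<exists>c. (\<forall>a\<in>sym_arcs V E. c a < m) \<and> proper_arc_col_I (sym_arcs V E) c \<and> distinguishing_arc_col V (sym_arcs V E) c"
  and "\<And>c k. k < m \<Longrightarrow> (\<forall>a\<in>sym_arcs V E. c a < k) \<Longrightarrow> proper_arc_col_I (sym_arcs V E) c \<Longrightarrow> distinguishing_arc_col V (sym_arcs V E) c \<Longrightarrow> False"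
  shows "chi_D12 V E = m"
  unfolding chi_D12_def
  apply (rule Least_equality)
  using assms(1) apply blast
  using assms(2) not_le by blast

lemma modsuc: "(v::nat) < n \<Longrightarrow> (v + 1) mod n = (if v + 1 = n then 0 else v + 1)"
proof (cases "v + 1 = n")
  case True then show ?thesis by simp
next
  case False
  assume "v < n"
  with False have "v + 1 < n" by simp
  then show ?thesis using False by simp
qed



lemma path_arcs: "(u,v) \<in> sym_arcs {..<n} path_edge \<longleftrightarrow> u < n \<and> v < n \<and> (v = u + 1 \<or> u = v + 1)"
  by (auto simp: sym_arcs_def path_edge_def)

lemma lower2:
  assumes "(u,v) \<in> A" "(v,u) \<in> A" "\<forall>a\<in>A. c a < k" "proper_arc_col_I A c" "k < 2"
  shows False
proof -
  have "c (u,v) \<noteq> c (v,u)" using two_col_rev[OF assms(4) assms(2) assms(1)] .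
  moreover have "c (u,v) < k" "c (v,u) < k" using assms by auto
  ultimately show False using assms(5) by linarith
qed

lemma path_ch: "i + 1 < n \<Longrightarrow> path_edge i (Suc i)" by (simp add: path_edge_def)
lemma path_nb: "i + 2 < n \<Longrightarrow> v < n \<Longrightarrow> path_edge (Suc i) v \<Longrightarrow> v = i \<or> v = i + 2"
  by (auto simp: path_edge_def)
lemma path_sym: "path_edge u v \<Longrightarrow> path_edge v u" by (auto simp: path_edge_def)

lemma aut_facts:
  assumes "digraph_aut V (sym_arcs V E) \<sigma>"
  shows "\<sigma> ` V = V" "inj_on \<sigma> V" "\<And>u v. u \<in> V \<Longrightarrow> v \<in> V \<Longrightarrow> E u v \<longleftrightarrow> E (\<sigma> u) (\<sigma> v)"
  using assms by (auto simp: digraph_aut_def sym_arcs_def bij_betw_def)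

lemma even_path:
  assumes "k \<ge> 1"
  shows "chi_D12 {..<2*k} path_edge = 2"
proof (rule chi_eq)
  let ?n = "2*k"
  let ?A = "sym_arcs {..<?n} path_edge"
  define c :: "nat \<times> nat \<Rightarrow> nat" where "c = (\<lambda>(u,v). u mod 2)"
  have r: "\<forall>a\<in>?A. c a < 2" by (auto simp: c_def)
  have p: "proper_arc_col_I ?A c"
    unfolding proper_arc_col_I_def c_def path_arcs by (auto; presburger)
  have d: "distinguishing_arc_col {..<?n} ?A c"
    unfolding distinguishing_arc_col_def
  proof (intro allI impI)
    fix \<sigma> assume h: "digraph_aut {..<?n} ?A \<sigma> \<and> (\<forall>(u, v)\<in>?A. c (\<sigma> u, \<sigma> v) = c (u, v))"
    then have aut: "digraph_aut {..<?n} ?A \<sigma>" and pres: "\<forall>(u, v)\<in>?A. c (\<sigma> u, \<sigma> v) = c (u, v)" by auto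
    note af = aut_facts[OF aut]
    have a01: "(0,1) \<in> ?A" using assms by (simp add: path_arcs)
    have "c (\<sigma> 0, \<sigma> 1) = c (0, 1)" using pres a01 by auto
    then have ev: "\<sigma> 0 mod 2 = 0" by (simp add: c_def)
    have s0lt: "\<sigma> 0 < ?n" using af(1) assms by auto
    have s0: "\<sigma> 0 = 0"
    proof (rule ccontr)
      assume ne: "\<sigma> 0 \<noteq> 0"
      let ?m = "\<sigma> 0"
      have "?m \<noteq> ?n - 1" using ev assms by presburger
      then have m1: "?m + 1 < ?n" using s0lt by simp
      obtain x where x: "x < ?n" "\<sigma> x = ?m - 1" using af(1) m1
        by (metis (no_types, lifting) add_lessD1 diff_le_self imageE le_less_trans lessThan_iff)
      obtain y where y: "y < ?n" "\<sigma> y = ?m + 1" using af(1) m1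
        by (metis imageE lessThan_iff)
      have "path_edge (\<sigma> 0) (\<sigma> x)" using x ne by (simp add: path_edge_def)
      then have "path_edge 0 x" using af(3)[of 0 x] x assms by simp
      then have "x = 1" by (simp add: path_edge_def)
      have "path_edge (\<sigma> 0) (\<sigma> y)" using y by (simp add: path_edge_def)
      then have "path_edge 0 y" using af(3)[of 0 y] y assms by simp
      then have "y = 1" by (simp add: path_edge_def)
      show False using x y \<open>x = 1\<close> \<open>y = 1\<close> ne by simp
    qed
    have "path_edge (\<sigma> 0) (\<sigma> 1)" using af(3)[of 0 1] assms by (simp add: path_edge_def)
    then have s1: "\<sigma> 1 = 1" using s0 by (simp add: path_edge_def)
    show "\<forall>v\<in>{..<?n}. \<sigma> v = v"
      using propagate[OF aut path_ch path_nb s0 s1] by auto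
  qed
  show "\<exists>c. (\<forall>a\<in>?A. c a < 2) \<and> proper_arc_col_I ?A c \<and> distinguishing_arc_col {..<?n} ?A c"
    using r p d by blast
next
  fix c :: "nat \<times> nat \<Rightarrow> nat" and k' :: nat
  assume "k' < 2" "\<forall>a\<in>sym_arcs {..<2*k} path_edge. c a < k'" "proper_arc_col_I (sym_arcs {..<2*k} path_edge) c"
  moreover have "(0,1) \<in> sym_arcs {..<2*k} path_edge" "(1,0) \<in> sym_arcs {..<2*k} path_edge"
    using assms by (auto simp: path_arcs)
  ultimately show False using lower2 by metis
qed



lemma rev_arcs: "u < 2*k+1 \<Longrightarrow> v < 2*k+1 \<Longrightarrow>
   (u,v) \<in> sym_arcs {..<2*k+1} path_edge \<longleftrightarrow> (2*k-u, 2*k-v) \<in> sym_arcs {..<2*k+1} path_edge"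
  unfolding path_arcs by arith

lemma odd_path:
  assumes "k \<ge> 1"
  shows "chi_D12 {..<2*k+1} path_edge = 3"
proof (rule chi_eq)
  let ?n = "2*k+1"
  let ?A = "sym_arcs {..<?n} path_edge"
  define c :: "nat \<times> nat \<Rightarrow> nat" where "c = (\<lambda>(u,v). if u = 0 \<and> v = 1 then 2 else u mod 2)"
  have r: "\<forall>a\<in>?A. c a < 3" by (auto simp: c_def)
  have p: "proper_arc_col_I ?A c"
    unfolding proper_arc_col_I_def c_def path_arcs by (auto; presburger)
  have d: "distinguishing_arc_col {..<?n} ?A c"
    unfolding distinguishing_arc_col_def
  proof (intro allI impI)
    fix \<sigma> assume h: "digraph_aut {..<?n} ?A \<sigma> \<and> (\<forall>(u, v)\<in>?A. c (\<sigma> u, \<sigma> v) = c (u, v))"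
    then have aut: "digraph_aut {..<?n} ?A \<sigma>" and pres: "\<forall>(u, v)\<in>?A. c (\<sigma> u, \<sigma> v) = c (u, v)" by auto
    have a01: "(0,1) \<in> ?A" using assms by (simp add: path_arcs)
    have "c (\<sigma> 0, \<sigma> 1) = c (0, 1)" using pres a01 by auto
    then have "c (\<sigma> 0, \<sigma> 1) = 2" by (simp add: c_def)
    then have s0: "\<sigma> 0 = 0" and s1: "\<sigma> 1 = 1" by (auto simp: c_def split: if_splits)
    show "\<forall>v\<in>{..<?n}. \<sigma> v = v"
      using propagate[OF aut path_ch[where n="?n"] path_nb[where n="?n"] s0 s1] by auto
  qed
  show "\<exists>c. (\<forall>a\<in>?A. c a < 3) \<and> proper_arc_col_I ?A c \<and> distinguishing_arc_col {..<?n} ?A c"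
    using r p d by blast
next
  let ?n = "2*k+1"
  let ?A = "sym_arcs {..<?n} path_edge"
  fix c :: "nat \<times> nat \<Rightarrow> nat" and k' :: nat
  assume k': "k' < 3" and lt: "\<forall>a\<in>?A. c a < k'" and pr: "proper_arc_col_I ?A c"
    and di: "distinguishing_arc_col {..<?n} ?A c"
  have lt2: "\<forall>a\<in>?A. c a < 2" using lt k' by fastforce
  note chn = two_col_chain[OF path_sym path_ch[where n="?n"] pr lt2]
  have col: "c (u,v) = (c (0,1) + u) mod 2" if "(u,v) \<in> ?A" for u v
  proof -
    from that have "v = u + 1 \<and> u + 1 < ?n \<or> u = v + 1 \<and> v + 1 < ?n" by (auto simp: path_arcs)
    then show ?thesis
    proof
      assume "v = u + 1 \<and> u + 1 < ?n" then show ?thesis using chn[where u=u] by simp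
    next
      assume "u = v + 1 \<and> v + 1 < ?n" then show ?thesis using chn[where u=v] by simp
    qed
  qed
  define \<rho> where "\<rho> = (\<lambda>u::nat. 2*k - u)"
  have bij: "bij_betw \<rho> {..<?n} {..<?n}"
    by (rule bij_betw_byWitness[where f' = \<rho>]) (auto simp: \<rho>_def)
  have aut: "digraph_aut {..<?n} ?A \<rho>"
    unfolding digraph_aut_def \<rho>_def using bij[unfolded \<rho>_def] rev_arcs[where k=k] by blast
  have pres: "\<forall>(u, v)\<in>?A. c (\<rho> u, \<rho> v) = c (u, v)"
  proof (clarify)
    fix u v assume uv: "(u,v) \<in> ?A"
    have uvl: "u < ?n" "v < ?n" using uv by (auto simp: path_arcs)
    have "(\<rho> u, \<rho> v) \<in> ?A" unfolding \<rho>_def using uv uvl rev_arcs[where k=k and u=u and v=v] by blast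
    then have "c (\<rho> u, \<rho> v) = (c (0,1) + (2*k - u)) mod 2" using col \<rho>_def by simp
    also have "\<dots> = (c (0,1) + u) mod 2" proof -
      have "u \<le> 2*k" using uvl by simp
      then obtain t where t: "2*k = u + t" using le_Suc_ex by blast
      then have "2*k - u = t" by simp
      moreover have "(c (0,1) + t) mod 2 = (c (0,1) + u) mod 2" using t by presburger
      ultimately show ?thesis by simp
    qed
    also have "\<dots> = c (u,v)" using col uv by simp
    finally show "c (\<rho> u, \<rho> v) = c (u, v)" .
  qed
  have "\<forall>v\<in>{..<?n}. \<rho> v = v" using di aut pres unfolding distinguishing_arc_col_def by blast
  then have "\<rho> 0 = 0" by simp
  then show False using assms by (simp add: \<rho>_def)
qed



lemma cycle_arcs: "(u,v) \<in> sym_arcs {..<n} (cycle_edge n) \<longleftrightarrow>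
   u < n \<and> v < n \<and> (v = (if u + 1 = n then 0 else u + 1) \<or> u = (if v + 1 = n then 0 else v + 1))"
  by (auto simp: sym_arcs_def cycle_edge_def modsuc)

lemma cyc_ch: "i + 1 < n \<Longrightarrow> cycle_edge n i (Suc i)" by (simp add: cycle_edge_def)
lemma cyc_nb: "i + 2 < n \<Longrightarrow> v < n \<Longrightarrow> cycle_edge n (Suc i) v \<Longrightarrow> v = i \<or> v = i + 2"
  unfolding cycle_edge_def using modsuc[of v n] modsuc[of "Suc i" n] by (auto split: if_splits)
lemma cyc_sym: "cycle_edge n u v \<Longrightarrow> cycle_edge n v u" by (auto simp: cycle_edge_def)

lemma rot_arcs:
  assumes "u < n" "v < n" "n \<ge> 3"
  shows "(u,v) \<in> sym_arcs {..<n} (cycle_edge n) \<longleftrightarrow>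
    (if u + 2 < n then u + 2 else u + 2 - n, if v + 2 < n then v + 2 else v + 2 - n) \<in> sym_arcs {..<n} (cycle_edge n)"
  unfolding cycle_arcs using assms by (simp split: if_splits; arith)


lemma cyc_adj: "(u,v) \<in> sym_arcs {..<n} (cycle_edge n) \<Longrightarrow>
  v = u+1 \<or> u = v+1 \<or> (u+1=n \<and> v=0) \<or> (v+1=n \<and> u=0)"
  unfolding cycle_arcs by (auto split: if_splits)

lemma cyc_par_even: assumes "even n" "(u,v) \<in> sym_arcs {..<n} (cycle_edge n)" shows "u mod 2 \<noteq> v mod 2"
proof -
  from cyc_adj[OF assms(2)] show ?thesis
  proof (elim disjE)
    assume "v = u + 1" then show ?thesis by presburger
  next
    assume "u = v + 1" then show ?thesis by presburger
  next
    assume "u + 1 = n \<and> v = 0" then show ?thesis using assms(1) by (auto; presburger)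
  next
    assume "v + 1 = n \<and> u = 0" then show ?thesis using assms(1) by (auto; presburger)
  qed
qed

lemma cyc_par_odd: assumes "odd n" "n \<ge> 3" "(u,v) \<in> sym_arcs {..<n} (cycle_edge n)" shows
   "(if u = n - 1 then 2 else u mod 2) \<noteq> (if v = n - 1 then (2::nat) else v mod 2)"
proof -
  from cyc_adj[OF assms(3)] show ?thesis
  proof (elim disjE)
    assume "v = u + 1" then show ?thesis by (auto; presburger)
  next
    assume "u = v + 1" then show ?thesis by (auto; presburger)
  next
    assume "u + 1 = n \<and> v = 0" then show ?thesis using assms(1,2) by (auto; presburger)
  next
    assume "v + 1 = n \<and> u = 0" then show ?thesis using assms(1,2) by (auto; presburger)
  qed
qed


lemma cycle_upper:
  assumes n3: "n \<ge> 3"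
  shows "\<exists>c. (\<forall>a\<in>sym_arcs {..<n} (cycle_edge n). c a < 3) \<and> proper_arc_col_I (sym_arcs {..<n} (cycle_edge n)) c
     \<and> distinguishing_arc_col {..<n} (sym_arcs {..<n} (cycle_edge n)) c"
proof (cases "even n")
  case True
  let ?A = "sym_arcs {..<n} (cycle_edge n)"
  define c :: "nat \<times> nat \<Rightarrow> nat" where "c = (\<lambda>(u,v). if u = 0 \<and> v = 1 then 2 else u mod 2)"
  have r: "\<forall>a\<in>?A. c a < 3" by (auto simp: c_def)
  have p: "proper_arc_col_I ?A c"
    unfolding proper_arc_col_I_def
  proof (intro allI impI)
    fix u v w assume a: "(u,v) \<in> ?A \<and> (v,w) \<in> ?A"
    then have par: "u mod 2 \<noteq> v mod 2" using cyc_par_even[OF True] by blast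
    have "u mod 2 < 2" "v mod 2 < 2" by auto
    then show "c (u,v) \<noteq> c (v,w)" unfolding c_def using par by (auto split: if_splits)
  qed
  have d: "distinguishing_arc_col {..<n} ?A c"
    unfolding distinguishing_arc_col_def
  proof (intro allI impI)
    fix \<sigma> assume h: "digraph_aut {..<n} ?A \<sigma> \<and> (\<forall>(u, v)\<in>?A. c (\<sigma> u, \<sigma> v) = c (u, v))"
    then have aut: "digraph_aut {..<n} ?A \<sigma>" and pres: "\<forall>(u, v)\<in>?A. c (\<sigma> u, \<sigma> v) = c (u, v)" by auto
    have a01: "(0,1) \<in> ?A" using n3 by (simp add: cycle_arcs)
    have "c (\<sigma> 0, \<sigma> 1) = c (0, 1)" using pres a01 by auto
    then have "c (\<sigma> 0, \<sigma> 1) = 2" by (simp add: c_def)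
    then have s0: "\<sigma> 0 = 0" and s1: "\<sigma> 1 = 1" by (auto simp: c_def split: if_splits)
    show "\<forall>v\<in>{..<n}. \<sigma> v = v"
      using propagate[OF aut cyc_ch[where n=n] cyc_nb[where n=n] s0 s1] by auto
  qed
  show ?thesis using r p d by blast
next
  case False
  let ?A = "sym_arcs {..<n} (cycle_edge n)"
  define c :: "nat \<times> nat \<Rightarrow> nat" where "c = (\<lambda>(u,v). if u = n - 1 then 2 else u mod 2)"
  have r: "\<forall>a\<in>?A. c a < 3" by (auto simp: c_def)
  have p: "proper_arc_col_I ?A c"
    unfolding proper_arc_col_I_def
  proof (intro allI impI)
    fix u v w assume a: "(u,v) \<in> ?A \<and> (v,w) \<in> ?A"
    then have par: "(if u = n - 1 then 2 else u mod 2) \<noteq> (if v = n - 1 then (2::nat) else v mod 2)"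
      using cyc_par_odd[OF False n3] by blast
    then show "c (u,v) \<noteq> c (v,w)" unfolding c_def by simp
  qed
  have d: "distinguishing_arc_col {..<n} ?A c"
    unfolding distinguishing_arc_col_def
  proof (intro allI impI)
    fix \<sigma> assume h: "digraph_aut {..<n} ?A \<sigma> \<and> (\<forall>(u, v)\<in>?A. c (\<sigma> u, \<sigma> v) = c (u, v))"
    then have aut: "digraph_aut {..<n} ?A \<sigma>" and pres: "\<forall>(u, v)\<in>?A. c (\<sigma> u, \<sigma> v) = c (u, v)" by auto
    note af = aut_facts[OF aut]
    have mp: "\<And>u. u < n \<Longrightarrow> \<sigma> u < n" using af(1) by auto
    have a01: "(0,1) \<in> ?A" using n3 by (simp add: cycle_arcs)
    have a1: "(n-1,0) \<in> ?A" using n3 by (simp add: cycle_arcs)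
    have "c (\<sigma> (n-1), \<sigma> 0) = c (n-1, 0)" using pres a1 by auto
    then have "c (\<sigma> (n-1), \<sigma> 0) = 2" by (simp add: c_def)
    then have sl: "\<sigma> (n-1) = n-1" by (auto simp: c_def split: if_splits)
    have "(\<sigma> (n-1), \<sigma> 0) \<in> ?A" using a1 af(3)[of "n-1" 0] mp n3 by (simp add: sym_arcs_def)
    then have "\<sigma> 0 = 0 \<or> \<sigma> 0 = n - 2" using sl n3 by (auto simp: cycle_arcs split: if_splits)
    moreover have "\<sigma> 0 \<noteq> n - 2"
    proof
      assume e: "\<sigma> 0 = n - 2"
      have "c (\<sigma> 0, \<sigma> 1) = c (0, 1)" using pres a01 n3 by (auto simp: cycle_arcs)
      moreover have "n - 2 \<noteq> n - 1" using n3 by simp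
      ultimately have "(n-2) mod 2 = 0" using e by (simp add: c_def)
      then show False using False n3 by presburger
    qed
    ultimately have s0: "\<sigma> 0 = 0" by blast
    have "(\<sigma> 0, \<sigma> 1) \<in> ?A" using a01 af(3)[of 0 1] mp n3 by (simp add: sym_arcs_def)
    then have "\<sigma> 1 = 1 \<or> \<sigma> 1 = n - 1" using s0 n3 by (auto simp: cycle_arcs split: if_splits)
    moreover have "\<sigma> 1 \<noteq> n - 1"
    proof
      assume "\<sigma> 1 = n - 1"
      then have "\<sigma> 1 = \<sigma> (n-1)" using sl by simp
      then show False using af(2) n3 unfolding inj_on_def by fastforce
    qed
    ultimately have s1: "\<sigma> 1 = 1" by blast
    show "\<forall>v\<in>{..<n}. \<sigma> v = v"
      using propagate[OF aut cyc_ch[where n=n] cyc_nb[where n=n] s0 s1] by auto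
  qed
  show ?thesis using r p d by blast
qed



lemma cycle_lower:
  assumes n3: "n \<ge> 3"
    and lt2: "\<forall>a\<in>sym_arcs {..<n} (cycle_edge n). c a < 2"
    and pr: "proper_arc_col_I (sym_arcs {..<n} (cycle_edge n)) c"
    and di: "distinguishing_arc_col {..<n} (sym_arcs {..<n} (cycle_edge n)) c"
  shows False
proof -
  let ?A = "sym_arcs {..<n} (cycle_edge n)"
  note chn = two_col_chain[OF cyc_sym cyc_ch[where n=n] pr lt2]
  obtain j where j: "n = Suc (Suc j)" using n3 by (metis add_2_eq_Suc le_Suc_ex numeral_3_eq_3 le_SucE le_add2 Suc_le_D)
  have j1: "j \<ge> 1" using n3 j by simp
  define a0 where "a0 = c (0,1)"
  have arcs: "(1,0) \<in> ?A" "(0,1) \<in> ?A" "(0, Suc j) \<in> ?A" "(Suc j, 0) \<in> ?A" "(j, Suc j) \<in> ?A" "(Suc j, j) \<in> ?A"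
    using j j1 by (auto simp: cycle_arcs)
  have l: "c (1,0) < 2" "c (0,1) < 2" "c (0, Suc j) < 2" "c (Suc j, 0) < 2" "c (j, Suc j) < 2" "c (Suc j, j) < 2"
    using arcs lt2 by auto
  have e1: "c (0, 1) = c (0, Suc j)" using two_col_out[OF pr arcs(1) arcs(2) arcs(3) l(2) l(3) l(1)] .
  have e2: "c (Suc j, j) = c (Suc j, 0)" using two_col_out[OF pr arcs(5) arcs(6) arcs(4) l(6) l(4) l(5)] .
  have e3: "c (0, Suc j) \<noteq> c (Suc j, 0)" using two_col_rev[OF pr arcs(4) arcs(3)] .
  have e4: "c (Suc j, j) = (a0 + j + 1) mod 2" using chn[where u=j] j unfolding a0_def by simp
  have a0l: "a0 < 2" using l(2) a0_def by simp
  show False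
  proof (cases "even n")
    case False
    then have "odd j" using j by simp
    then have "(a0 + j + 1) mod 2 = a0" using a0l by presburger
    then show False using e1 e2 e3 e4 a0_def by simp
  next
    case True
    have col: "c (u,v) = (a0 + u) mod 2" if "(u,v) \<in> ?A" for u v
    proof -
      from cyc_adj[OF that] show ?thesis
      proof (elim disjE)
        assume "v = u + 1" then show ?thesis using chn[where u=u] that j unfolding a0_def by (auto simp: cycle_arcs)
      next
        assume "u = v + 1" then show ?thesis using chn[where u=v] that j unfolding a0_def by (auto simp: cycle_arcs)
      next
        assume h: "u + 1 = n \<and> v = 0"
        then have "u = Suc j" using j by simp
        then show ?thesis using h e2 e4 True j by simp
      next
        assume h: "v + 1 = n \<and> u = 0"
        then have "v = Suc j" using j by simp
        then show ?thesis using h e1 a0l a0_def by simp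
      qed
    qed
    define \<rho> where "\<rho> = (\<lambda>u::nat. if u + 2 < n then u + 2 else u + 2 - n)"
    define \<rho>' where "\<rho>' = (\<lambda>u::nat. if 2 \<le> u then u - 2 else u + n - 2)"
    have bij: "bij_betw \<rho> {..<n} {..<n}"
      by (rule bij_betw_byWitness[where f' = \<rho>']) (use n3 in \<open>auto simp: \<rho>_def \<rho>'_def\<close>)
    have ra: "\<And>u v. u < n \<Longrightarrow> v < n \<Longrightarrow> (u,v) \<in> ?A \<longleftrightarrow> (\<rho> u, \<rho> v) \<in> ?A"
      unfolding \<rho>_def using rot_arcs n3 by blast
    have aut: "digraph_aut {..<n} ?A \<rho>"
      unfolding digraph_aut_def using bij ra by blast
    have pres: "\<forall>(u, v)\<in>?A. c (\<rho> u, \<rho> v) = c (u, v)"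
    proof (clarify)
      fix u v assume uv: "(u,v) \<in> ?A"
      have uvl: "u < n" "v < n" using uv by (auto simp: cycle_arcs)
      have "(\<rho> u, \<rho> v) \<in> ?A" using ra uv uvl by blast
      then have "c (\<rho> u, \<rho> v) = (a0 + \<rho> u) mod 2" using col by simp
      also have "\<dots> = (a0 + u) mod 2"
      proof (cases "u + 2 < n")
        case True then show ?thesis unfolding \<rho>_def by simp
      next
        case False
        then obtain t where t: "u + 2 = n + t" using le_Suc_ex by (metis not_less)
        then have "\<rho> u = t" unfolding \<rho>_def using False by simp
        then show ?thesis using t \<open>even n\<close> by presburger
      qed
      also have "\<dots> = c (u,v)" using col uv by simp
      finally show "c (\<rho> u, \<rho> v) = c (u, v)" .
    qed
    have "\<forall>v\<in>{..<n}. \<rho> v = v" using di aut pres unfolding distinguishing_arc_col_def by blast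
    then have "\<rho> 0 = 0" using n3 by simp
    then show False using n3 by (simp add: \<rho>_def)
  qed
qed


lemma cycle_chi:
  assumes "n \<ge> 3"
  shows "chi_D12 {..<n} (cycle_edge n) = 3"
proof (rule chi_eq)
  show "\<exists>c. (\<forall>a\<in>sym_arcs {..<n} (cycle_edge n). c a < 3) \<and> proper_arc_col_I (sym_arcs {..<n} (cycle_edge n)) c
     \<and> distinguishing_arc_col {..<n} (sym_arcs {..<n} (cycle_edge n)) c"
    using cycle_upper[OF assms] .
next
  fix c :: "nat \<times> nat \<Rightarrow> nat" and k' :: nat
  assume k': "k' < 3" and lt: "\<forall>a\<in>sym_arcs {..<n} (cycle_edge n). c a < k'"
    and pr: "proper_arc_col_I (sym_arcs {..<n} (cycle_edge n)) c"
    and di: "distinguishing_arc_col {..<n} (sym_arcs {..<n} (cycle_edge n)) c"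
  have lt2: "\<forall>a\<in>sym_arcs {..<n} (cycle_edge n). c a < 2" using lt k' by fastforce
  show False using cycle_lower[OF assms lt2 pr di] .
qed

theorem mainTheorem3:
  shows "(\<forall>k::nat. k \<ge> 1 \<longrightarrow>
            chi_D12 {..<2*k} path_edge = 2 \<and> chi_D12 {..<2*k+1} path_edge = 3) \<and>
         (\<forall>n::nat. n \<ge> 3 \<longrightarrow> chi_D12 {..<n} (cycle_edge n) = 3)"
  using even_path odd_path cycle_chi by blast

end
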